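(* Let $G\in\mathcal{C}$, let $H$ be a hole of $G$, let $v$ be a major vertex for $H$, let $u$ be a clone of $y$ in $H$, and suppose $uv\in E(G)$. If $yv\notin E(G)$, then $u$ and $v$ have a common neighbor in $H$.
   Context: All graphs are finite and simple; paths are induced paths; a hole is an induced cycle of length at least four. $\mathcal{C}$ is the class of graphs containing no theta, pyramid, prism or turtle as an induced subgraph, where: a theta consists of two nonadjacent vertices $a,b$ and three paths from $a$ to $b$, otherwise vertex-disjoint, any two of which induce a hole; a pyramid consists of a vertex $a$, a triangle $\{b_1,b_2,b_3\}$ and paths $P_i$ from $a$ to $b_i$, pairwise disjoint except at $a$, any two of which induce a hole; a prism consists of two disjoint triangles $\{a_1,a_2,a_3\},\{b_1,b_2,b_3\}$ and pairwise disjoint paths $P_i$ from $a_i$ to $b_i$, any two of which induce a hole; a turtle consists of disjoint paths $P_1$ (from $a_1$ to $b_1$), $P_2$ (from $a_2$ to $b_2$) with $a_1a_2,b_1b_2$ edges and $V(P_1)\cup V(P_2)$ inducing a hole, plus adjacent vertices $x,y$ where $x$ has at least three neighbors in $P_1$ and none in $P_2$, and $y$ has at least three neighbors in $P_2$ and none in $P_1$. For a hole $H$ and $u\notin V(H)$, $N_H(u)$ is the set of neighbors of $u$ in $H$. A vertex $u\notin V(H)$ is minor for $H$ if $N_H(u)\neq\emptyset$ and $N_H(u)$ is contained in the vertex set of some three-vertex subpath of $H$; it is major for $H$ if $N_H(u)\ne\emptyset$ and $u$ is not minor. A vertex $u\notin V(H)$ is a clone of $y\in V(H)$ if $N_H(u)=\{x,y,z\}$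 where $x\text{-}y\text{-}z$ is a subpath of $H$. *)

theory Defs
  imports Main
begin

definition graph :: "'a set \<Rightarrow> ('a \<Rightarrow> 'a \<Rightarrow> bool) \<Rightarrow> bool" where
  "graph V E \<longleftrightarrow> finite V \<and> (\<forall>x y. E x y \<longrightarrow> x \<in> V \<and> y \<in> V)
     \<and> (\<forall>x y. E x y \<longrightarrow> E y x) \<and> (\<forall>x. \<not> E x x)"

definition ipath :: "'a set \<Rightarrow> ('a \<Rightarrow> 'a \<Rightarrow> bool) \<Rightarrow> 'a list \<Rightarrow> bool" where
  "ipath V E ps \<longleftrightarrow> ps \<noteq> [] \<and> distinct ps \<and> set ps \<subseteq> V
     \<and> (\<forall>i. i + 1 < length ps \<longrightarrow> E (ps ! i) (ps ! (i + 1)))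
     \<and> (\<forall>i j. i + 1 < j \<and> j < length ps \<longrightarrow> \<not> E (ps ! i) (ps ! j))"

definition path_from_to :: "'a set \<Rightarrow> ('a \<Rightarrow> 'a \<Rightarrow> bool) \<Rightarrow> 'a list \<Rightarrow> 'a \<Rightarrow> 'a \<Rightarrow> bool" where
  "path_from_to V E ps a b \<longleftrightarrow> ipath V E ps \<and> hd ps = a \<and> last ps = b"

definition hole :: "'a set \<Rightarrow> ('a \<Rightarrow> 'a \<Rightarrow> bool) \<Rightarrow> 'a list \<Rightarrow> bool" where
  "hole V E cs \<longleftrightarrow> length cs \<ge> 4 \<and> distinct cs \<and> set cs \<subseteq> V
     \<and> (\<forall>i < length cs. E (cs ! i) (cs ! ((i + 1) mod length cs)))
     \<and> (\<forall>i < length cs. \<forall>j < length cs. E (cs ! i) (cs ! j) \<longrightarrow>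
           j = (i + 1) mod length cs \<or> i = (j + 1) mod length cs)"

definition induces_hole :: "'a set \<Rightarrow> ('a \<Rightarrow> 'a \<Rightarrow> bool) \<Rightarrow> 'a set \<Rightarrow> bool" where
  "induces_hole V E S \<longleftrightarrow> (\<exists>cs. hole V E cs \<and> set cs = S)"

definition has_theta :: "'a set \<Rightarrow> ('a \<Rightarrow> 'a \<Rightarrow> bool) \<Rightarrow> bool" where
  "has_theta V E \<longleftrightarrow> (\<exists>a b P1 P2 P3. a \<noteq> b \<and> \<not> E a b
     \<and> path_from_to V E P1 a b \<and> path_from_to V E P2 a b \<and> path_from_to V E P3 a b
     \<and> set P1 \<inter> set P2 = {a, b} \<and> set P1 \<inter> set P3 = {a, b} \<and> set P2 \<inter> set P3 = {a, b}
     \<and> induces_hole V E (set P1 \<union> set P2) \<and> induces_hole V E (set P1 \<union> set P3)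
     \<and> induces_hole V E (set P2 \<union> set P3))"

definition has_pyramid :: "'a set \<Rightarrow> ('a \<Rightarrow> 'a \<Rightarrow> bool) \<Rightarrow> bool" where
  "has_pyramid V E \<longleftrightarrow> (\<exists>a b1 b2 b3 P1 P2 P3.
     E b1 b2 \<and> E b1 b3 \<and> E b2 b3
     \<and> path_from_to V E P1 a b1 \<and> path_from_to V E P2 a b2 \<and> path_from_to V E P3 a b3
     \<and> set P1 \<inter> set P2 = {a} \<and> set P1 \<inter> set P3 = {a} \<and> set P2 \<inter> set P3 = {a}
     \<and> induces_hole V E (set P1 \<union> set P2) \<and> induces_hole V E (set P1 \<union> set P3)
     \<and> induces_hole V E (set P2 \<union> set P3))"

definition has_prism :: "'a set \<Rightarrow> ('a \<Rightarrow> 'a \<Rightarrow> bool) \<Rightarrow> bool" where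
  "has_prism V E \<longleftrightarrow> (\<exists>a1 a2 a3 b1 b2 b3 P1 P2 P3.
     E a1 a2 \<and> E a1 a3 \<and> E a2 a3 \<and> E b1 b2 \<and> E b1 b3 \<and> E b2 b3
     \<and> {a1, a2, a3} \<inter> {b1, b2, b3} = {}
     \<and> path_from_to V E P1 a1 b1 \<and> path_from_to V E P2 a2 b2 \<and> path_from_to V E P3 a3 b3
     \<and> set P1 \<inter> set P2 = {} \<and> set P1 \<inter> set P3 = {} \<and> set P2 \<inter> set P3 = {}
     \<and> induces_hole V E (set P1 \<union> set P2) \<and> induces_hole V E (set P1 \<union> set P3)
     \<and> induces_hole V E (set P2 \<union> set P3))"

definition has_turtle :: "'a set \<Rightarrow> ('a \<Rightarrow> 'a \<Rightarrow> bool) \<Rightarrow> bool" where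
  "has_turtle V E \<longleftrightarrow> (\<exists>a1 b1 a2 b2 P1 P2 x y.
     path_from_to V E P1 a1 b1 \<and> path_from_to V E P2 a2 b2
     \<and> set P1 \<inter> set P2 = {} \<and> E a1 a2 \<and> E b1 b2
     \<and> induces_hole V E (set P1 \<union> set P2)
     \<and> x \<in> V \<and> y \<in> V \<and> x \<notin> set P1 \<union> set P2 \<and> y \<notin> set P1 \<union> set P2 \<and> E x y
     \<and> card {w \<in> set P1. E x w} \<ge> 3 \<and> (\<forall>w \<in> set P2. \<not> E x w)
     \<and> card {w \<in> set P2. E y w} \<ge> 3 \<and> (\<forall>w \<in> set P1. \<not> E y w))"

definition in_C :: "'a set \<Rightarrow> ('a \<Rightarrow> 'a \<Rightarrow> bool) \<Rightarrow> bool" where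
  "in_C V E \<longleftrightarrow> graph V E \<and> \<not> has_theta V E \<and> \<not> has_pyramid V E
     \<and> \<not> has_prism V E \<and> \<not> has_turtle V E"

definition nbrs_in :: "('a \<Rightarrow> 'a \<Rightarrow> bool) \<Rightarrow> 'a list \<Rightarrow> 'a \<Rightarrow> 'a set" where
  "nbrs_in E H u = {x \<in> set H. E u x}"

definition sub3 :: "'a list \<Rightarrow> nat \<Rightarrow> 'a set" where
  "sub3 H i = {H ! i, H ! ((i + 1) mod length H), H ! ((i + 2) mod length H)}"

definition minor :: "('a \<Rightarrow> 'a \<Rightarrow> bool) \<Rightarrow> 'a list \<Rightarrow> 'a \<Rightarrow> bool" where
  "minor E H u \<longleftrightarrow> u \<notin> set H \<and> nbrs_in E H u \<noteq> {}
     \<and> (\<exists>i < length H. nbrs_in E H u \<subseteq> sub3 H i)"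

definition major :: "('a \<Rightarrow> 'a \<Rightarrow> bool) \<Rightarrow> 'a list \<Rightarrow> 'a \<Rightarrow> bool" where
  "major E H u \<longleftrightarrow> u \<notin> set H \<and> nbrs_in E H u \<noteq> {} \<and> \<not> minor E H u"

definition clone :: "('a \<Rightarrow> 'a \<Rightarrow> bool) \<Rightarrow> 'a list \<Rightarrow> 'a \<Rightarrow> 'a \<Rightarrow> bool" where
  "clone E H u y \<longleftrightarrow> u \<notin> set H \<and> (\<exists>i < length H. y = H ! ((i + 1) mod length H)
     \<and> nbrs_in E H u = sub3 H i)"

end

theory Submission
  imports Defs
begin


lemma mod_inj:
  fixes n s a b :: nat
  assumes "a < n" "b < n" "(s + a) mod n = (s + b) mod n"
  shows "a = b"
proof -
  show ?thesis
  proof (cases "a \<le> b")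
    case True
    hence "n dvd b - a" using mod_eq_dvd_iff_nat[of "s+a" "s+b" n] assms(3) by simp
    moreover have "b - a < n" using assms(2) by linarith
    ultimately have "\<not> 0 < b - a" using nat_dvd_not_less[of "b-a" n] by blast
    thus ?thesis using True by linarith
  next
    case False
    hence "n dvd a - b" using mod_eq_dvd_iff_nat[of "s+b" "s+a" n] assms(3) by simp
    moreover have "a - b < n" using assms(1) by linarith
    ultimately have "\<not> 0 < a - b" using nat_dvd_not_less[of "a-b" n] by blast
    thus ?thesis using False by linarith
  qed
qed

definition arc :: "'a list \<Rightarrow> nat \<Rightarrow> nat \<Rightarrow> 'a list" where
  "arc H s L = map (\<lambda>k. H ! ((s + k) mod length H)) [0..<L]"

lemma arc03: "length H \<ge> 4 \<Longrightarrow> arc H 0 3 = [H!0, H!1, H!2]"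
  by (simp add: arc_def numeral_3_eq_3 upt_rec numeral_2_eq_2)

lemma hole_adj:
  assumes h: "hole V E H" and sym: "\<forall>x y. E x y \<longrightarrow> E y x"
    and "i < length H" "j < length H"
  shows "E (H!i) (H!j) \<longleftrightarrow> (j = (i+1) mod length H \<or> i = (j+1) mod length H)"
proof -
  have e: "\<forall>i < length H. E (H ! i) (H ! ((i + 1) mod length H))"
    and n: "\<forall>i < length H. \<forall>j < length H. E (H ! i) (H ! j) \<longrightarrow>
           j = (i + 1) mod length H \<or> i = (j + 1) mod length H"
    using h unfolding hole_def by auto
  show ?thesis
  proof
    assume "E (H!i) (H!j)" thus "j = (i + 1) mod length H \<or> i = (j + 1) mod length H"
      using n assms(3,4) by blast
  next
    assume "j = (i + 1) mod length H \<or> i = (j + 1) mod length H"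
    thus "E (H!i) (H!j)"
    proof
      assume "j = (i + 1) mod length H" thus ?thesis using e assms(3) by auto
    next
      assume "i = (j + 1) mod length H"
      hence "E (H!j) (H!i)" using e assms(4) by auto
      thus ?thesis using sym by blast
    qed
  qed
qed

lemma hole_nth_eq:
  assumes h: "hole V E H" "i < length H" "j < length H"
  shows "H!i = H!j \<longleftrightarrow> i = j"
  using assms unfolding hole_def by (simp add: nth_eq_iff_index_eq)

lemma arc_nth: "k < L \<Longrightarrow> arc H s L ! k = H ! ((s + k) mod length H)"
  by (simp add: arc_def)

lemma arc_len[simp]: "length (arc H s L) = L" by (simp add: arc_def)

lemma set_arc: "set (arc H s L) = {H ! ((s + k) mod length H) | k. k < L}"
  by (auto simp: arc_def)

lemma arc_ipath:
  assumes h: "hole V E H" and sym: "\<forall>x y. E x y \<longrightarrow> E y x"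
    and L: "1 \<le> L" "L < length H"
  shows "ipath V E (arc H s L)"
proof -
  let ?n = "length H"
  have n0: "?n > 0" using L by linarith
  have sH: "set H \<subseteq> V" using h by (simp add: hole_def)
  have dist: "distinct (arc H s L)"
  proof (subst distinct_conv_nth, intro allI impI)
    fix i j assume ij: "i < length (arc H s L)" "j < length (arc H s L)" "i \<noteq> j"
    hence "(s+i) mod ?n \<noteq> (s+j) mod ?n" using mod_inj[of i ?n j s] L by auto
    thus "arc H s L ! i \<noteq> arc H s L ! j" using ij hole_nth_eq[OF h] n0 by (simp add: arc_nth)
  qed
  have sV: "set (arc H s L) \<subseteq> V" using sH n0 by (auto simp: set_arc)
  have edges: "E (arc H s L ! i) (arc H s L ! (i+1))" if "i + 1 < length (arc H s L)" for i
  proof -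
    have "E (H ! ((s+i) mod ?n)) (H ! (((s+i) mod ?n + 1) mod ?n))"
      using h n0 unfolding hole_def by simp
    moreover have "((s+i) mod ?n + 1) mod ?n = (s + (i+1)) mod ?n" by (simp add: mod_simps)
    ultimately show ?thesis using that by (simp add: arc_nth)
  qed
  have nonadj: "\<not> E (arc H s L ! i) (arc H s L ! j)" if "i + 1 < j" "j < length (arc H s L)" for i j
  proof
    assume e: "E (arc H s L ! i) (arc H s L ! j)"
    hence "E (H ! ((s+i) mod ?n)) (H ! ((s+j) mod ?n))" using that by (simp add: arc_nth)
    hence "(s+j) mod ?n = ((s+i) mod ?n + 1) mod ?n \<or> (s+i) mod ?n = ((s+j) mod ?n + 1) mod ?n"
      using hole_adj[OF h sym] n0 by simp
    hence "(s+j) mod ?n = (s+(i+1)) mod ?n \<or> (s+i) mod ?n = (s+(j+1)) mod ?n"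
      by (simp add: mod_simps)
    moreover have "(s+j) mod ?n \<noteq> (s+(i+1)) mod ?n" using mod_inj[of j ?n "i+1" s] that L by auto
    moreover have "(s+i) mod ?n \<noteq> (s+(j+1)) mod ?n" using mod_inj[of i ?n "j+1" s] that L by auto
    ultimately show False by blast
  qed
  show ?thesis unfolding ipath_def using dist sV edges nonadj L by (auto simp: arc_def)
qed

lemma ipath_rev:
  assumes sym: "\<forall>x y. E x y \<longrightarrow> E y x" and p: "ipath V E ps"
  shows "ipath V E (rev ps)"
proof -
  let ?L = "length ps"
  have edges: "E (rev ps ! i) (rev ps ! (i+1))" if "i + 1 < ?L" for i
  proof -
    have "E (ps ! (?L - 2 - i)) (ps ! (?L - 2 - i + 1))" using p that unfolding ipath_def by auto
    moreover have "?L - 2 - i + 1 = ?L - Suc i" using that by simp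
    ultimately show ?thesis using that sym by (simp add: rev_nth Suc_diff_Suc numeral_2_eq_2)
  qed
  have nonadj: "\<not> E (rev ps ! i) (rev ps ! j)" if "i + 1 < j" "j < ?L" for i j
  proof -
    have "\<not> E (ps ! (?L - Suc j)) (ps ! (?L - Suc i))" using p that unfolding ipath_def by auto
    thus ?thesis using that sym by (auto simp: rev_nth)
  qed
  show ?thesis using p edges nonadj unfolding ipath_def by auto
qed

lemma ipath3:
  assumes "distinct [a,b,c]" "{a,b,c} \<subseteq> V" "E a b" "E b c" "\<not> E a c"
  shows "ipath V E [a,b,c]"
proof -
  have 1: "\<forall>i. i + 1 < length [a,b,c] \<longrightarrow> E ([a,b,c] ! i) ([a,b,c] ! (i + 1))"
  proof (intro allI impI)
    fix i assume "i + 1 < length [a,b,c]"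
    hence "i = 0 \<or> i = 1" by auto
    thus "E ([a,b,c] ! i) ([a,b,c] ! (i + 1))" using assms by auto
  qed
  have 2: "\<forall>i j. i + 1 < j \<and> j < length [a,b,c] \<longrightarrow> \<not> E ([a,b,c] ! i) ([a,b,c] ! j)"
  proof (intro allI impI)
    fix i j assume "i + 1 < j \<and> j < length [a,b,c]"
    hence "i = 0 \<and> j = 2" by auto
    thus "\<not> E ([a,b,c] ! i) ([a,b,c] ! j)" using assms by auto
  qed
  show ?thesis unfolding ipath_def using 1 2 assms by auto
qed


lemma hole_cons:
  assumes sym: "\<forall>x y. E x y \<longrightarrow> E y x" and irr: "\<forall>x. \<not> E x x"
    and p: "ipath V E ps" and L3: "length ps \<ge> 3" and wV: "w \<in> V" and wn: "w \<notin> set ps"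
    and nb: "\<forall>k < length ps. E w (ps!k) \<longleftrightarrow> (k = 0 \<or> k = length ps - 1)"
  shows "hole V E (w # ps)"
proof -
  let ?L = "length ps"
  let ?c = "w # ps"
  have pe: "\<And>i. i + 1 < ?L \<Longrightarrow> E (ps!i) (ps!(i+1))" using p unfolding ipath_def by blast
  have pn: "\<And>i j. i + 1 < j \<Longrightarrow> j < ?L \<Longrightarrow> \<not> E (ps!i) (ps!j)" using p unfolding ipath_def by blast
  have edges: "E (?c ! i) (?c ! ((i + 1) mod length ?c))" if ii: "i < length ?c" for i
  proof -
    consider "i = 0" | "i = ?L" | "0 < i" "i < ?L" using ii by (metis (no_types) less_Suc_eq neq0_conv length_Cons)
    thus ?thesis
    proof cases
      case 1
      have "0 < ?L" using L3 by linarith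
      hence "E w (ps!0) = (0 = (0::nat) \<or> 0 = ?L - 1)" using nb by blast
      hence "E w (ps!0)" by simp
      moreover have "(0+1) mod length ?c = 1" using L3 by (cases ps) auto
      ultimately show ?thesis using 1 by simp
    next
      case 2
      have "E w (ps ! (?L - 1))" using nb L3 by simp
      hence "E (ps ! (?L - 1)) w" using sym by blast
      moreover have "ps \<noteq> []" using L3 by (cases ps) auto
      ultimately show ?thesis using 2 by (simp add: nth_Cons')
    next
      case 3
      have "i - 1 + 1 < ?L" "i - 1 + 1 = i" using 3 by linarith+
      hence "E (ps!(i-1)) (ps!i)" using pe[of "i-1"] by simp
      thus ?thesis using 3 by (simp add: nth_Cons')
    qed
  qed
  have nonadj: "j = (i + 1) mod length ?c \<or> i = (j + 1) mod length ?c"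
    if ij: "i < length ?c" "j < length ?c" "E (?c ! i) (?c ! j)" for i j
  proof -
    have key: "j = (i + 1) mod length ?c \<or> i = (j + 1) mod length ?c"
      if ij: "i < length ?c" "j < length ?c" "E (?c ! i) (?c ! j)" "i \<le> j" for i j
    proof (cases "i = 0")
      case True
      have "j \<noteq> 0"
      proof
        assume "j = 0" thus False using ij True irr by simp
      qed
      hence "E w (ps ! (j - 1))" using ij True by (simp add: nth_Cons')
      hence "j - 1 = 0 \<or> j - 1 = ?L - 1" using nb ij \<open>j \<noteq> 0\<close> by auto
      thus ?thesis
      proof
        assume "j - 1 = 0"
        hence "j = 1" using \<open>j \<noteq> 0\<close> by linarith
        moreover have "(0 + 1) mod length ?c = 1" using L3 by (cases ps) auto
        ultimately show ?thesis using True by simp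
      next
        assume "j - 1 = ?L - 1"
        hence "j = ?L" using \<open>j \<noteq> 0\<close> L3 by linarith
        hence "(j + 1) mod length ?c = 0" by simp
        thus ?thesis using True by simp
      qed
    next
      case False
      hence e: "E (ps!(i-1)) (ps!(j-1))" using ij by (simp add: nth_Cons')
      have "i \<noteq> j" using e irr by auto
      have "j - 1 < ?L" using ij(2) L3 by simp
      hence "\<not> (i - 1 + 1 < j - 1)" using pn[of "i-1" "j-1"] e by blast
      hence "j = i + 1" using \<open>i \<noteq> j\<close> ij False by auto
      thus ?thesis using ij by simp
    qed
    show ?thesis
    proof (cases "i \<le> j")
      case True thus ?thesis using key ij by blast
    next
      case False
      have "E (?c ! j) (?c ! i)" using ij sym by blast
      thus ?thesis using key[of j i] ij False by auto
    qed
  qed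
  have "distinct ?c" using p wn unfolding ipath_def by simp
  moreover have "set ?c \<subseteq> V" using p wV unfolding ipath_def by simp
  ultimately show ?thesis unfolding hole_def using L3 edges nonadj by auto
qed

lemma hole_rotate:
  assumes h: "hole V E H" and sym: "\<forall>x y. E x y \<longrightarrow> E y x"
  shows "hole V E (rotate k H)"
proof -
  let ?n = "length H"
  let ?R = "rotate k H"
  have n4: "?n \<ge> 4" using h by (simp add: hole_def)
  have Rn: "\<And>i. i < ?n \<Longrightarrow> ?R ! i = H ! ((i + k) mod ?n)" by (simp add: nth_rotate add.commute)
  have edges: "E (?R ! i) (?R ! ((i + 1) mod length ?R))" if "i < length ?R" for i
  proof -
    have e: "\<forall>i<?n. E (H!i) (H!((i+1) mod ?n))" using h by (simp add: hole_def)
    have "(i+k) mod ?n < ?n" by (rule mod_less_divisor) (use n4 in linarith)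
    hence "E (H ! ((i+k) mod ?n)) (H ! (((i+k) mod ?n + 1) mod ?n))" using e by blast
    moreover have "((i+k) mod ?n + 1) mod ?n = ((i + 1) mod ?n + k) mod ?n" by (simp add: mod_simps ac_simps)
    moreover have lt: "(i+1) mod ?n < ?n" by (rule mod_less_divisor) (use n4 in linarith)
    moreover have "?R ! ((i+1) mod ?n) = H!(((i+1) mod ?n + k) mod ?n)" using Rn[OF lt] .
    ultimately show ?thesis using that Rn by simp
  qed
  have nonadj: "j = (i + 1) mod length ?R \<or> i = (j + 1) mod length ?R"
    if ij: "i < length ?R" "j < length ?R" "E (?R ! i) (?R ! j)" for i j
  proof -
    have ee: "E (H ! ((i+k) mod ?n)) (H ! ((j+k) mod ?n))" using ij Rn by simp
    have n0: "0 < ?n" using n4 by linarith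
    have lt: "(i+k) mod ?n < ?n" "(j+k) mod ?n < ?n" using n0 by auto
    have "(j+k) mod ?n = ((i+k) mod ?n + 1) mod ?n \<or> (i+k) mod ?n = ((j+k) mod ?n + 1) mod ?n"
      using hole_adj[OF h sym lt(1) lt(2)] ee by blast
    hence "(k + j) mod ?n = (k + (i+1) mod ?n) mod ?n \<or> (k + i) mod ?n = (k + (j+1) mod ?n) mod ?n"
      by (simp add: mod_simps ac_simps)
    moreover have "(i+1) mod ?n < ?n" "(j+1) mod ?n < ?n" using n0 by auto
    ultimately have "j = (i+1) mod ?n \<or> i = (j+1) mod ?n" using mod_inj ij by (metis length_rotate)
    thus ?thesis by simp
  qed
  show ?thesis using h edges nonadj unfolding hole_def by (simp add: set_rotate)
qed

lemma nbrs_rotate: "nbrs_in E (rotate k H) w = nbrs_in E H w"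
  by (simp add: nbrs_in_def)

lemma minor_rotate:
  assumes "minor E (rotate k H) v"
  shows "minor E H v"
proof -
  let ?n = "length H"
  let ?R = "rotate k H"
  obtain j where j: "j < ?n" "nbrs_in E H v \<subseteq> sub3 ?R j"
    using assms by (auto simp: minor_def nbrs_rotate)
  have n0: "?n > 0" using j by auto
  have "sub3 ?R j = sub3 H ((j + k) mod ?n)"
  proof -
    have "?R ! j = H ! ((j + k) mod ?n)" using j by (simp add: nth_rotate add.commute)
    moreover have "?R ! ((j+1) mod ?n) = H ! (((j + k) mod ?n + 1) mod ?n)"
      using n0 by (simp add: nth_rotate mod_simps ac_simps)
    moreover have "?R ! ((j+2) mod ?n) = H ! (((j + k) mod ?n + 2) mod ?n)"
      using n0 by (simp add: nth_rotate mod_simps ac_simps)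
    ultimately show ?thesis by (simp add: sub3_def)
  qed
  thus ?thesis using assms j n0 by (auto simp: minor_def nbrs_rotate)
qed



lemma main_turtle:
  assumes G: "graph V E" and ntu: "\<not> has_turtle V E"
    and h: "hole V E H" and uH: "u \<notin> set H" and nu: "nbrs_in E H u = {H!0, H!1, H!2}"
    and vH: "v \<notin> set H"
    and uv: "E u v" and v0: "\<not> E v (H!0)" and v1: "\<not> E v (H!1)" and v2: "\<not> E v (H!2)"
    and c3: "card (nbrs_in E H v) \<ge> 3"
  shows False
proof -
  have sym: "\<forall>x y. E x y \<longrightarrow> E y x" and inV: "\<forall>x y. E x y \<longrightarrow> x \<in> V \<and> y \<in> V"
    using G by (auto simp: graph_def)
  define n where "n = length H"
  have n4: "n \<ge> 4" using h by (simp add: hole_def n_def)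
  have uV: "u \<in> V" "v \<in> V" using inV uv by auto
  have idx: "\<And>i j. i < n \<Longrightarrow> j < n \<Longrightarrow> H!i = H!j \<longleftrightarrow> i = j"
    using hole_nth_eq[OF h] n_def by simp
  have adjH: "\<And>i j. i < n \<Longrightarrow> j < n \<Longrightarrow> E (H!i) (H!j) \<longleftrightarrow> (j = (i+1) mod n \<or> i = (j+1) mod n)"
    using hole_adj[OF h sym] n_def by simp
  have setH: "set H = {H!k | k. k < n}" by (auto simp: in_set_conv_nth n_def)
  define P1 where "P1 = rev (arc H 0 3)"
  define P2 where "P2 = arc H 3 (n-3)"
  have a03: "arc H 0 3 = [H!0,H!1,H!2]" using arc03 n4 n_def by simp
  have sP1: "set P1 = {H!0,H!1,H!2}" by (auto simp: P1_def a03)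
  have pP1: "path_from_to V E P1 (H!2) (H!0)"
    unfolding path_from_to_def P1_def
    using ipath_rev[OF sym arc_ipath[OF h sym, of 3 0]] n4 a03 n_def by simp
  have ipP2: "ipath V E P2" unfolding P2_def using arc_ipath[OF h sym, of "n-3" 3] n4 n_def by simp
  have P2ne: "P2 \<noteq> []" using n4 by (simp add: P2_def arc_def)
  have hdP2: "hd P2 = H!3" using P2ne n4 by (simp add: hd_conv_nth P2_def arc_nth n_def)
  have lastP2: "last P2 = H!(n-1)"
  proof -
    have "last P2 = P2 ! (n - 4)" using P2ne n4 by (simp add: last_conv_nth P2_def)
    also have "\<dots> = H ! ((3 + (n-4)) mod n)" using n4 by (simp add: P2_def arc_nth n_def)
    also have "(3 + (n-4)) mod n = n - 1" using n4 by simp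
    finally show ?thesis .
  qed
  have pP2: "path_from_to V E P2 (H!3) (H!(n-1))" using ipP2 hdP2 lastP2 by (simp add: path_from_to_def)
  have sP2: "set P2 = {H!k | k. 3 \<le> k \<and> k < n}"
  proof
    show "set P2 \<subseteq> {H!k | k. 3 \<le> k \<and> k < n}"
    proof
      fix x assume "x \<in> set P2"
      then obtain k where k: "k < n - 3" "x = H ! ((3 + k) mod n)" by (auto simp: P2_def set_arc n_def)
      hence "(3 + k) mod n = 3 + k" by simp
      thus "x \<in> {H!k | k. 3 \<le> k \<and> k < n}" using k by auto
    qed
  next
    show "{H!k | k. 3 \<le> k \<and> k < n} \<subseteq> set P2"
    proof
      fix x assume "x \<in> {H!k | k. 3 \<le> k \<and> k < n}"
      then obtain j where j: "3 \<le> j" "j < n" "x = H!j" by auto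
      have "x = H ! ((3 + (j - 3)) mod n)" "j - 3 < n - 3" using j by auto
      thus "x \<in> set P2" unfolding P2_def set_arc n_def by blast
    qed
  qed
  have disj: "set P1 \<inter> set P2 = {}"
  proof (rule ccontr)
    assume "set P1 \<inter> set P2 \<noteq> {}"
    then obtain x where x: "x \<in> set P1" "x \<in> set P2" by blast
    from x(2) sP2 obtain k where k: "3 \<le> k" "k < n" "x = H!k" by blast
    from x(1) sP1 have "x = H!0 \<or> x = H!1 \<or> x = H!2" by blast
    thus False using k idx[of 0 k] idx[of 1 k] idx[of 2 k] by auto
  qed
  have union: "set P1 \<union> set P2 = set H"
  proof -
    have "x \<in> set P1 \<union> set P2" if xx: "x \<in> set H" for x
    proof -
      obtain k where k: "k < n" "x = H!k" using xx setH by auto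
      show ?thesis
      proof (cases "k < 3")
        case True hence "k = 0 \<or> k = 1 \<or> k = 2" by auto
        thus ?thesis using k sP1 by auto
      next
        case False thus ?thesis using k sP2 by auto
      qed
    qed
    moreover have "set P1 \<subseteq> set H" using sP1 n4 setH by auto
    moreover have "set P2 \<subseteq> set H" using sP2 setH by auto
    ultimately show ?thesis by blast
  qed
  have e1: "E (H!2) (H!3)" using adjH[of 2 3] n4 by simp
  have e2: "E (H!0) (H!(n-1))" using adjH[of 0 "n-1"] n4 by simp
  have ih: "induces_hole V E (set P1 \<union> set P2)" unfolding induces_hole_def using h union by blast
  have "0 < length H" "1 < length H" "2 < length H" using n4 n_def by linarith+
  hence H012: "H!0 \<in> set H" "H!1 \<in> set H" "H!2 \<in> set H" using nth_mem by blast+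
  have c1: "{w \<in> set P1. E u w} = {H!0,H!1,H!2}"
    using nu sP1 H012 by (auto simp: nbrs_in_def)
  have d012: "H!0 \<noteq> H!1" "H!0 \<noteq> H!2" "H!1 \<noteq> H!2" using idx n4 by auto
  have card1: "card {w \<in> set P1. E u w} \<ge> 3" using c1 d012 by simp
  have nv1: "\<forall>w \<in> set P1. \<not> E v w" using sP1 v0 v1 v2 by auto
  have c2: "{w \<in> set P2. E v w} = nbrs_in E H v"
    unfolding nbrs_in_def using union nv1 by blast
  have nu2: "\<forall>w \<in> set P2. \<not> E u w"
  proof (intro ballI notI)
    fix w assume w: "w \<in> set P2" "E u w"
    hence "w \<in> nbrs_in E H u" using union by (auto simp: nbrs_in_def)
    hence "w \<in> set P1" using nu sP1 by simp
    thus False using w disj by blast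
  qed
  have "has_turtle V E"
    unfolding has_turtle_def
    apply (rule exI[of _ "H!2"], rule exI[of _ "H!0"], rule exI[of _ "H!3"], rule exI[of _ "H!(n-1)"])
    apply (rule exI[of _ P1], rule exI[of _ P2], rule exI[of _ u], rule exI[of _ v])
    apply (intro conjI)
    using pP1 apply blast
    using pP2 apply blast
    using disj apply blast
    using e1 apply blast
    using e2 apply blast
    using ih apply blast
    using uV apply blast
    using uV apply blast
    using union uH apply blast
    using union vH apply blast
    using uv apply blast
    using card1 apply blast
    using nu2 apply blast
    using c2 c3 apply simp
    using nv1 apply blast
    done
  thus False using ntu by blast
qed



lemma main_theta:
  assumes G: "graph V E" and nth: "\<not> has_theta V E"
    and h: "hole V E H" and vH: "v \<notin> set H" and vV: "v \<in> V"
    and p3: "3 \<le> p" and pq: "p + 2 \<le> q" and qn: "q < length H"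
    and vadj: "\<forall>k < length H. E v (H!k) \<longleftrightarrow> (k = p \<or> k = q)"
  shows False
proof -
  have sym: "\<forall>x y. E x y \<longrightarrow> E y x" and irr: "\<forall>x. \<not> E x x"
    using G by (auto simp: graph_def)
  define n where "n = length H"
  have n4: "n \<ge> 4" using h by (simp add: hole_def n_def)
  have qn': "q < n" using qn n_def by simp
  have HV: "set H \<subseteq> V" using h by (simp add: hole_def)
  have idx: "\<And>i j. i < n \<Longrightarrow> j < n \<Longrightarrow> H!i = H!j \<longleftrightarrow> i = j"
    using hole_nth_eq[OF h] n_def by simp
  have adjH: "\<And>i j. i < n \<Longrightarrow> j < n \<Longrightarrow> E (H!i) (H!j) \<longleftrightarrow> (j = (i+1) mod n \<or> i = (j+1) mod n)"
    using hole_adj[OF h sym] n_def by simp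
  have setH: "set H = {H!k | k. k < n}" by (auto simp: in_set_conv_nth n_def)
  have va: "\<And>k. k < n \<Longrightarrow> E v (H!k) \<longleftrightarrow> (k = p \<or> k = q)" using vadj n_def by simp
  have pn: "p < n" using pq qn' by linarith
  have Hp: "H!p \<in> set H" "H!q \<in> set H" using pn qn' n_def by auto
  have nab: "H!p \<noteq> H!q" using idx pn qn' pq by auto
  have nEab: "\<not> E (H!p) (H!q)"
  proof
    assume "E (H!p) (H!q)"
    hence "q = (p+1) mod n \<or> p = (q+1) mod n" using adjH pn qn' by blast
    moreover have "(p+1) mod n = p + 1" using pq qn' by simp
    moreover have "(q+1) mod n = q + 1 \<or> (q+1) mod n = 0"
    proof (cases "q + 1 < n")
      case True thus ?thesis by simp
    next
      case False hence "q + 1 = n" using qn' by linarith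
      thus ?thesis by simp
    qed
    ultimately show False using pq p3 by auto
  qed
  define P1 where "P1 = arc H p (q-p+1)"
  define P2 where "P2 = [H!p, v, H!q]"
  define A where "A = arc H q (n-q+p+1)"
  define P3 where "P3 = rev A"
  have P1n: "\<And>k. k < q-p+1 \<Longrightarrow> P1 ! k = H!(p+k)"
  proof -
    fix k assume "k < q-p+1"
    hence "p + k < n" using qn' pq by linarith
    hence "(p+k) mod n = p+k" by simp
    thus "P1 ! k = H!(p+k)" using \<open>k < q-p+1\<close> by (simp add: P1_def arc_nth n_def)
  qed
  have ipP1: "ipath V E P1" unfolding P1_def using arc_ipath[OF h sym, of "q-p+1" p] pq p3 qn' n_def by simp
  have pP1: "path_from_to V E P1 (H!p) (H!q)"
  proof -
    have ne: "P1 \<noteq> []" using pq by (simp add: P1_def arc_def)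
    have "hd P1 = H!p" using ne P1n[of 0] by (simp add: hd_conv_nth)
    moreover have "last P1 = H!q" using ne P1n[of "q-p"] pq by (simp add: last_conv_nth P1_def)
    ultimately show ?thesis using ipP1 by (simp add: path_from_to_def)
  qed
  have sP1: "set P1 = {H!j | j. p \<le> j \<and> j \<le> q}"
  proof
    show "set P1 \<subseteq> {H!j | j. p \<le> j \<and> j \<le> q}"
    proof
      fix x assume "x \<in> set P1"
      then obtain k where k: "k < q-p+1" "x = P1 ! k" by (auto simp: in_set_conv_nth P1_def)
      hence "x = H!(p+k)" "p \<le> p + k" "p + k \<le> q" using P1n[of k] pq by auto
      thus "x \<in> {H!j | j. p \<le> j \<and> j \<le> q}" by blast
    qed
  next
    show "{H!j | j. p \<le> j \<and> j \<le> q} \<subseteq> set P1"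
    proof
      fix x assume "x \<in> {H!j | j. p \<le> j \<and> j \<le> q}"
      then obtain j where j: "p \<le> j" "j \<le> q" "x = H!j" by blast
      have "j - p < q-p+1" using j by linarith
      hence "P1 ! (j-p) = x" using P1n[of "j-p"] j by simp
      thus "x \<in> set P1" using \<open>j - p < q-p+1\<close> by (metis P1_def arc_len nth_mem)
    qed
  qed
  have pP2: "path_from_to V E P2 (H!p) (H!q)"
  proof -
    have "ipath V E P2" unfolding P2_def
    proof (rule ipath3)
      show "distinct [H!p, v, H!q]" using nab vH Hp by auto
      show "{H!p, v, H!q} \<subseteq> V" using HV Hp vV by auto
      show "E (H!p) v" using va[of p] pn sym by blast
      show "E v (H!q)" using va[of q] qn' by blast
      show "\<not> E (H!p) (H!q)" by (rule nEab)
    qed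
    thus ?thesis by (simp add: path_from_to_def P2_def)
  qed
  have An: "\<And>k. k < n-q+p+1 \<Longrightarrow> A ! k = H!((q+k) mod n)" by (simp add: A_def arc_nth n_def)
  have ipA: "ipath V E A" unfolding A_def using arc_ipath[OF h sym, of "n-q+p+1" q] pq qn' n_def by simp
  have Ane: "A \<noteq> []" by (simp add: A_def arc_def)
  have hdA: "hd A = H!q" using Ane An[of 0] qn' by (simp add: hd_conv_nth)
  have lastA: "last A = H!p"
  proof -
    have "last A = A ! (n-q+p)" using Ane by (simp add: last_conv_nth A_def)
    also have "\<dots> = H!((q + (n-q+p)) mod n)" using An by simp
    also have "q + (n-q+p) = n + p" using qn' by simp
    also have "(n + p) mod n = p" using pn by simp
    finally show ?thesis .
  qed
  have pP3: "path_from_to V E P3 (H!p) (H!q)"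
    using ipath_rev[OF sym ipA] hdA lastA Ane by (simp add: path_from_to_def P3_def hd_rev last_rev)
  have sA: "\<And>x. x \<in> set A \<longleftrightarrow> (\<exists>j<n. x = H!j \<and> (j \<le> p \<or> q \<le> j))"
  proof
    fix x assume "x \<in> set A"
    then obtain k where k: "k < n-q+p+1" "x = H ! ((q+k) mod n)" by (auto simp: A_def set_arc n_def)
    show "\<exists>j<n. x = H!j \<and> (j \<le> p \<or> q \<le> j)"
    proof (cases "q + k < n")
      case True thus ?thesis using k by auto
    next
      case False
      hence "n \<le> q + k" by linarith
      hence "(q+k) mod n = (q + k - n) mod n" by (rule le_mod_geq)
      moreover have "q + k - n < n" using k pn qn' by linarith
      ultimately have "(q+k) mod n = q + k - n" by simp
      moreover have "q + k - n \<le> p" using k qn' by linarith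
      moreover have "q + k - n < n" using k pn qn' by linarith
      ultimately show ?thesis using k by auto
    qed
  next
    fix x assume "\<exists>j<n. x = H!j \<and> (j \<le> p \<or> q \<le> j)"
    then obtain j where j: "j < n" "x = H!j" "j \<le> p \<or> q \<le> j" by blast
    show "x \<in> set A"
    proof (cases "q \<le> j")
      case True
      have "x = H ! ((q + (j - q)) mod n)" "j - q < n-q+p+1" using True j by auto
      thus ?thesis unfolding A_def set_arc n_def by blast
    next
      case False
      hence jp: "j \<le> p" using j by auto
      have "q + (n - q + j) = n + j" using qn' by simp
      hence "(q + (n - q + j)) mod n = j" using j by simp
      hence "x = H ! ((q + (n - q + j)) mod n)" "n - q + j < n-q+p+1" using jp j by auto
      thus ?thesis unfolding A_def set_arc n_def by blast
    qed
  qed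
  have sP3: "set P3 = set A" by (simp add: P3_def)
  have AH: "set A \<subseteq> set H" using sA setH by auto
  have P1H: "set P1 \<subseteq> set H" using sP1 setH qn' by auto
  have ApA: "H!p \<in> set A" "H!q \<in> set A" using sA pn qn' by auto
  have P1pq: "H!p \<in> set P1" "H!q \<in> set P1" using sP1 pq by auto
  have i12: "set P1 \<inter> set P2 = {H!p, H!q}" using P1pq P1H vH by (auto simp: P2_def)
  have i23: "set P2 \<inter> set P3 = {H!p, H!q}" using ApA AH vH sP3 by (auto simp: P2_def)
  have i13: "set P1 \<inter> set P3 = {H!p, H!q}"
  proof
    show "{H!p, H!q} \<subseteq> set P1 \<inter> set P3" using P1pq ApA sP3 by auto
    show "set P1 \<inter> set P3 \<subseteq> {H!p, H!q}"
    proof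
      fix x assume x: "x \<in> set P1 \<inter> set P3"
      then obtain j1 where j1: "p \<le> j1" "j1 \<le> q" "x = H!j1" using sP1 by auto
      obtain j2 where j2: "j2 < n" "x = H!j2" "j2 \<le> p \<or> q \<le> j2" using x sP3 sA by auto
      have "j1 = j2" using idx[of j1 j2] j1 j2 qn' by auto
      hence "j1 = p \<or> j1 = q" using j1 j2 by auto
      thus "x \<in> {H!p, H!q}" using j1 by auto
    qed
  qed
  have un13: "set P1 \<union> set P3 = set H"
  proof
    show "set P1 \<union> set P3 \<subseteq> set H" using P1H AH sP3 by auto
    show "set H \<subseteq> set P1 \<union> set P3"
    proof
      fix x assume "x \<in> set H"
      then obtain j where j: "j < n" "x = H!j" using setH by auto
      show "x \<in> set P1 \<union> set P3"
      proof (cases "j \<le> p \<or> q \<le> j")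
        case True thus ?thesis using j sA sP3 by auto
      next
        case False thus ?thesis using j sP1 by auto
      qed
    qed
  qed
  have h13: "induces_hole V E (set P1 \<union> set P3)" unfolding induces_hole_def using un13 h by blast
  have h12: "induces_hole V E (set P1 \<union> set P2)"
  proof -
    have "hole V E (v # P1)"
    proof (rule hole_cons[OF sym irr ipP1])
      show "length P1 \<ge> 3" using pq by (simp add: P1_def)
      show "v \<in> V" by (rule vV)
      show "v \<notin> set P1" using vH P1H by auto
      show "\<forall>k < length P1. E v (P1!k) \<longleftrightarrow> (k = 0 \<or> k = length P1 - 1)"
      proof (intro allI impI)
        fix k assume k: "k < length P1"
        hence k': "k < q-p+1" by (simp add: P1_def)
        hence "p + k < n" using qn' pq by linarith
        hence "E v (P1!k) \<longleftrightarrow> (p + k = p \<or> p + k = q)" using va P1n[OF k'] by simp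
        also have "\<dots> \<longleftrightarrow> (k = 0 \<or> k = length P1 - 1)" using pq by (auto simp: P1_def)
        finally show "E v (P1!k) \<longleftrightarrow> (k = 0 \<or> k = length P1 - 1)" .
      qed
    qed
    moreover have "set (v # P1) = set P1 \<union> set P2" using P1pq by (auto simp: P2_def)
    ultimately show ?thesis unfolding induces_hole_def by metis
  qed
  have h23: "induces_hole V E (set P2 \<union> set P3)"
  proof -
    have "hole V E (v # A)"
    proof (rule hole_cons[OF sym irr ipA])
      show "length A \<ge> 3" using pq p3 qn' by (simp add: A_def)
      show "v \<in> V" by (rule vV)
      show "v \<notin> set A" using vH AH by auto
      show "\<forall>k < length A. E v (A!k) \<longleftrightarrow> (k = 0 \<or> k = length A - 1)"
      proof (intro allI impI)
        fix k assume k: "k < length A"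
        hence k': "k < n-q+p+1" by (simp add: A_def)
        have kn: "k < n" "n-q+p < n" using k' pq qn' by linarith+
        have lt: "(q+k) mod n < n" using n4 by simp
        have "E v (A!k) \<longleftrightarrow> ((q+k) mod n = p \<or> (q+k) mod n = q)" using va[OF lt] An[OF k'] by simp
        also have "(q+k) mod n = q \<longleftrightarrow> k = 0"
        proof
          assume "(q+k) mod n = q"
          hence "(q+k) mod n = (q+0) mod n" using qn' by simp
          thus "k = 0" using mod_inj[of k n 0 q] kn n4 by simp
        qed (use qn' in simp)
        also have "(q+k) mod n = p \<longleftrightarrow> k = n-q+p"
        proof
          have e: "(q + (n-q+p)) mod n = p" using qn' pn by simp
          assume "(q+k) mod n = p"
          hence "(q+k) mod n = (q + (n-q+p)) mod n" using e by simp
          thus "k = n-q+p" using mod_inj[of k n "n-q+p" q] kn by simp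
        next
          assume "k = n-q+p" thus "(q+k) mod n = p" using qn' pn by simp
        qed
        finally show "E v (A!k) \<longleftrightarrow> (k = 0 \<or> k = length A - 1)" by (auto simp: A_def)
      qed
    qed
    moreover have "set (v # A) = set P2 \<union> set P3" using ApA sP3 by (auto simp: P2_def)
    ultimately show ?thesis unfolding induces_hole_def by metis
  qed
  have "has_theta V E"
    unfolding has_theta_def
    apply (rule exI[of _ "H!p"], rule exI[of _ "H!q"], rule exI[of _ P1], rule exI[of _ P2], rule exI[of _ P3])
    using nab nEab pP1 pP2 pP3 i12 i13 i23 h12 h13 h23 by blast
  thus False using nth by blast
qed



lemma main:
  assumes G: "graph V E" and nth: "\<not> has_theta V E" and ntu: "\<not> has_turtle V E"
    and h: "hole V E H" and uH: "u \<notin> set H" and nu: "nbrs_in E H u = {H!0, H!1, H!2}"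
    and vH: "v \<notin> set H" and nvne: "nbrs_in E H v \<noteq> {}" and nmin: "\<not> minor E H v"
    and uv: "E u v" and v0: "\<not> E v (H!0)" and v1: "\<not> E v (H!1)" and v2: "\<not> E v (H!2)"
  shows False
proof -
  have inV: "\<forall>x y. E x y \<longrightarrow> x \<in> V \<and> y \<in> V" using G by (auto simp: graph_def)
  have vV: "v \<in> V" using inV uv by blast
  define n where "n = length H"
  have dH: "distinct H" using h by (simp add: hole_def)
  define I where "I = {k. k < n \<and> E v (H!k)}"
  have NI: "nbrs_in E H v = (\<lambda>k. H!k) ` I"
    by (auto simp: nbrs_in_def I_def in_set_conv_nth n_def)
  have finI: "finite I" unfolding I_def by simp
  have cardNI: "card (nbrs_in E H v) = card I"
    unfolding NI by (rule card_image, rule inj_on_nth[OF dH]) (simp add: I_def n_def)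
  have I3: "\<And>k. k \<in> I \<Longrightarrow> 3 \<le> k"
  proof -
    fix k assume k: "k \<in> I"
    show "3 \<le> k"
    proof (rule ccontr)
      assume "\<not> 3 \<le> k" hence "k = 0 \<or> k = 1 \<or> k = 2" by auto
      thus False using k v0 v1 v2 by (auto simp: I_def)
    qed
  qed
  show False
  proof (cases "3 \<le> card (nbrs_in E H v)")
    case True
    thus False using main_turtle[OF G ntu h uH nu vH uv v0 v1 v2] by blast
  next
    case False
    hence c2: "card I \<le> 2" using cardNI by simp
    have Ine: "I \<noteq> {}" using nvne NI by auto
    define p where "p = Min I"
    define q where "q = Max I"
    have pI: "p \<in> I" "q \<in> I" using Ine finI by (simp_all add: p_def q_def)
    have pq: "p \<le> q" using pI finI by (simp add: p_def)
    have qn: "q < n" using pI by (simp add: I_def)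
    have Ipq: "\<And>k. k \<in> I \<Longrightarrow> k = p \<or> k = q"
    proof (rule ccontr)
      fix k assume k: "k \<in> I" "\<not> (k = p \<or> k = q)"
      have "p \<le> k" "k \<le> q" using k finI by (simp_all add: p_def q_def)
      hence "p < k" "k < q" using k by auto
      hence "card {p, k, q} = 3" by simp
      moreover have "{p, k, q} \<subseteq> I" using k pI by auto
      ultimately have "3 \<le> card I" using card_mono[OF finI] by metis
      thus False using c2 by simp
    qed
    have vadj: "\<forall>k < length H. E v (H!k) \<longleftrightarrow> (k = p \<or> k = q)"
      using Ipq pI by (auto simp: I_def n_def)
    show False
    proof (cases "q \<le> p + 1")
      case True
      have "nbrs_in E H v \<subseteq> sub3 H p"
      proof
        fix x assume "x \<in> nbrs_in E H v"
        then obtain k where k: "k \<in> I" "x = H!k" using NI by auto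
        hence "k = p \<or> k = q" using Ipq by blast
        thus "x \<in> sub3 H p"
        proof
          assume "k = p" thus ?thesis using k by (simp add: sub3_def)
        next
          assume kq: "k = q"
          show ?thesis
          proof (cases "q = p")
            case True thus ?thesis using k kq by (simp add: sub3_def)
          next
            case False
            hence "q = p + 1" using True pq by linarith
            hence "(p + 1) mod n = q" using qn by simp
            thus ?thesis using k kq by (simp add: sub3_def n_def)
          qed
        qed
      qed
      moreover have "p < length H" using pq qn n_def by simp
      ultimately have "minor E H v" using vH nvne by (auto simp: minor_def)
      thus False using nmin by blast
    next
      case False
      show False
        using main_theta[OF G nth h vH vV I3[OF pI(1)] _ _ vadj] False qn n_def by simp
    qed
  qed
qed

theorem lemma2p3:
  fixes V :: "'a set" and E :: "'a \<Rightarrow> 'a \<Rightarrow> bool" and H :: "'a list" and u v y :: 'a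
  assumes "in_C V E"
    and "hole V E H"
    and "major E H v"
    and "clone E H u y"
    and "E u v"
    and "\<not> E y v"
  shows "\<exists>w \<in> set H. E u w \<and> E v w"
proof (rule ccontr)
  assume nc: "\<not> (\<exists>w \<in> set H. E u w \<and> E v w)"
  have G: "graph V E" and nth: "\<not> has_theta V E" and ntu: "\<not> has_turtle V E"
    using assms(1) by (auto simp: in_C_def)
  have sym: "\<forall>x y. E x y \<longrightarrow> E y x" using G by (auto simp: graph_def)
  define n where "n = length H"
  have n4: "n \<ge> 4" using assms(2) by (simp add: hole_def n_def)
  obtain i where i: "i < n" "nbrs_in E H u = sub3 H i" and uH: "u \<notin> set H"
    using assms(4) by (auto simp: clone_def n_def)
  define R where "R = rotate i H"
  have hR: "hole V E R" unfolding R_def by (rule hole_rotate[OF assms(2) sym])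
  have l: "0 < length H" "1 < length H" "2 < length H" using n4 n_def by linarith+
  have R0: "R!0 = H!i" using i nth_rotate[OF l(1), of i] by (simp add: R_def n_def)
  have R1: "R!1 = H!((i+1) mod n)" using nth_rotate[OF l(2), of i] by (simp add: R_def n_def add.commute)
  have R2: "R!2 = H!((i+2) mod n)" using nth_rotate[OF l(3), of i] by (simp add: R_def n_def add.commute)
  have nuR: "nbrs_in E R u = {R!0, R!1, R!2}"
    using i(2) R0 R1 R2 by (simp add: R_def nbrs_rotate sub3_def n_def)
  have nvR: "\<And>w. w \<in> {R!0, R!1, R!2} \<Longrightarrow> \<not> E v w"
  proof -
    fix w assume "w \<in> {R!0, R!1, R!2}"
    hence "w \<in> nbrs_in E H u" using nuR by (simp add: R_def nbrs_rotate)
    hence "w \<in> set H" "E u w" by (auto simp: nbrs_in_def)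
    thus "\<not> E v w" using nc by blast
  qed
  have vH: "v \<notin> set R" and nvne: "nbrs_in E R v \<noteq> {}" and nmin: "\<not> minor E R v"
    using assms(3) minor_rotate[of E i H v] by (auto simp: major_def R_def nbrs_rotate)
  have uR: "u \<notin> set R" using uH by (simp add: R_def)
  show False
    using main[OF G nth ntu hR uR nuR vH nvne nmin assms(5)] nvR by blast
qed


end
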